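(* Let $Q$ be a finite Moufang loop and let $d=2^a3^b>1$ with $a,b\ge 0$ integers. Then $Q$ is uniquely $d$-divisible if and only if $|Q|$ is coprime to $d$.
   Context: A loop is a magma with identity in which all left and right translations are bijections; it is Moufang if it satisfies $xy\cdot zx=(x\cdot yz)x$ (Moufang loops are power associative). A power associative loop is uniquely $d$-divisible if the map $x\mapsto x^d$ is a bijection. *)

theory Defs
  imports Main
begin

definition loop :: "'a set \<Rightarrow> ('a \<Rightarrow> 'a \<Rightarrow> 'a) \<Rightarrow> 'a \<Rightarrow> bool" where
  "loop Q m e \<longleftrightarrow> e \<in> Q \<and> (\<forall>x\<in>Q. \<forall>y\<in>Q. m x y \<in> Q)
     \<and> (\<forall>x\<in>Q. m e x = x \<and> m x e = x)
     \<and> (\<forall>a\<in>Q. bij_betw (\<lambda>x. m a x) Q Q \<and> bij_betw (\<lambda>x. m x a) Q Q)"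

definition moufang_loop :: "'a set \<Rightarrow> ('a \<Rightarrow> 'a \<Rightarrow> 'a) \<Rightarrow> 'a \<Rightarrow> bool" where
  "moufang_loop Q m e \<longleftrightarrow> loop Q m e \<and>
     (\<forall>x\<in>Q. \<forall>y\<in>Q. \<forall>z\<in>Q. m (m x y) (m z x) = m (m x (m y z)) x)"

text \<open>Powers x^n (well defined in power associative loops such as Moufang loops).\<close>
primrec loop_pow :: "('a \<Rightarrow> 'a \<Rightarrow> 'a) \<Rightarrow> 'a \<Rightarrow> 'a \<Rightarrow> nat \<Rightarrow> 'a" where
  "loop_pow m e x 0 = e"
| "loop_pow m e x (Suc n) = m (loop_pow m e x n) x"

definition uniquely_divisible :: "'a set \<Rightarrow> ('a \<Rightarrow> 'a \<Rightarrow> 'a) \<Rightarrow> 'a \<Rightarrow> nat \<Rightarrow> bool" where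
  "uniquely_divisible Q m e d \<longleftrightarrow> bij_betw (\<lambda>x. loop_pow m e x d) Q Q"

end

theory Submission
  imports Defs
begin

lemma cyc2:
  assumes fin: "finite X" and sX: "\<And>x. x \<in> X \<Longrightarrow> s x \<in> X"
    and ss: "\<And>x. x \<in> X \<Longrightarrow> s (s x) = x"
  shows "2 dvd card (X - {x\<in>X. s x = x})"
proof -
  define A where "A = X - {x\<in>X. s x = x}"
  have sA: "s x \<in> A" if "x \<in> A" for x
    using that sX ss unfolding A_def by force
  define r where "r = {(x,y). x\<in>A \<and> y\<in>A \<and> (y = x \<or> y = s x)}"
  have eq: "equiv A r"
  proof (rule equivI)
    show "refl_on A r" by (rule refl_onI) (auto simp: r_def)
    show "r \<subseteq> A \<times> A" by (auto simp: r_def)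
    show "sym r" by (rule symI) (auto simp: r_def A_def ss)
    show "trans r" by (rule transI) (auto simp: r_def A_def ss)
  qed
  have "2 dvd card Y" if "Y \<in> A // r" for Y
  proof -
    obtain x where x: "x \<in> A" "Y = r `` {x}" using \<open>Y \<in> A // r\<close> by (auto elim: quotientE)
    have "Y = {x, s x}" using x sA by (auto simp: r_def)
    moreover have "x \<noteq> s x" using x(1) unfolding A_def by auto
    ultimately show ?thesis by simp
  qed
  then have "2 dvd card A"
    by (intro equiv_imp_dvd_card[OF _ eq]) (use fin in \<open>auto simp: A_def\<close>)
  then show ?thesis by (simp add: A_def)
qed

lemma cyc3:
  assumes fin: "finite X" and sX: "\<And>x. x \<in> X \<Longrightarrow> s x \<in> X"
    and ss: "\<And>x. x \<in> X \<Longrightarrow> s (s (s x)) = x"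
  shows "3 dvd card (X - {x\<in>X. s x = x})"
proof -
  define A where "A = X - {x\<in>X. s x = x}"
  have sA: "s x \<in> A" if "x \<in> A" for x
    using that sX ss unfolding A_def by force
  define r where "r = {(x,y). x\<in>A \<and> y\<in>A \<and> (y = x \<or> y = s x \<or> y = s (s x))}"
  have eq: "equiv A r"
  proof (rule equivI)
    show "refl_on A r" by (rule refl_onI) (auto simp: r_def)
    show "r \<subseteq> A \<times> A" by (auto simp: r_def)
    show "sym r" by (rule symI) (auto simp: r_def A_def ss sX)
    show "trans r" by (rule transI) (auto simp: r_def A_def ss sX)
  qed
  have "3 dvd card Y" if "Y \<in> A // r" for Y
  proof -
    obtain x where x: "x \<in> A" "Y = r `` {x}" using \<open>Y \<in> A // r\<close> by (auto elim: quotientE)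
    have "Y = {x, s x, s (s x)}" using x sA by (auto simp: r_def)
    moreover have n1: "x \<noteq> s x" using x(1) unfolding A_def by auto
    moreover have xX: "x \<in> X" using x(1) unfolding A_def by auto
    moreover have "s (s x) \<noteq> x"
    proof
      assume "s (s x) = x"
      then have "s (s (s x)) = s x" by simp
      then show False using ss[OF xX] n1 by simp
    qed
    moreover have "s (s x) \<noteq> s x"
    proof
      assume h: "s (s x) = s x"
      then have "s (s (s x)) = s (s x)" by simp
      then show False using ss[OF xX] n1 h by simp
    qed
    ultimately have "card Y = 3" by simp
    then show ?thesis by simp
  qed
  then have "3 dvd card A"
    by (intro equiv_imp_dvd_card[OF _ eq]) (use fin in \<open>auto simp: A_def\<close>)
  then show ?thesis by (simp add: A_def)
qed

locale mfl = fixes Q :: "'a set" and m :: "'a \<Rightarrow> 'a \<Rightarrow> 'a" and e :: 'a and i :: "'a \<Rightarrow> 'a"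
  assumes cl: "x \<in> Q \<Longrightarrow> y \<in> Q \<Longrightarrow> m x y \<in> Q"
  and eQ: "e \<in> Q" and le: "x \<in> Q \<Longrightarrow> m e x = x" and re: "x \<in> Q \<Longrightarrow> m x e = x"
  and lc: "x \<in> Q \<Longrightarrow> y \<in> Q \<Longrightarrow> z \<in> Q \<Longrightarrow> m x y = m x z \<Longrightarrow> y = z"
  and rc: "x \<in> Q \<Longrightarrow> y \<in> Q \<Longrightarrow> z \<in> Q \<Longrightarrow> m y x = m z x \<Longrightarrow> y = z"
  and iQ: "x \<in> Q \<Longrightarrow> i x \<in> Q" and ri: "x \<in> Q \<Longrightarrow> m x (i x) = e"
  and mo: "x \<in> Q \<Longrightarrow> y \<in> Q \<Longrightarrow> z \<in> Q \<Longrightarrow> m (m x y) (m z x) = m (m x (m y z)) x"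
begin
lemma flex: "x \<in> Q \<Longrightarrow> y \<in> Q \<Longrightarrow> m x (m y x) = m (m x y) x"
  using mo[of x e y] eQ le re by simp
lemma li: "x \<in> Q \<Longrightarrow> m (i x) x = e"
proof -
  assume x: "x \<in> Q"
  have "m (m x (i x)) (m x x) = m (m x (m (i x) x)) x" using mo[OF x iQ[OF x] x] .
  then have "m x x = m (m x (m (i x) x)) x" using ri[OF x] le[OF cl[OF x x]] by simp
  then have "x = m x (m (i x) x)" using rc[OF x x cl[OF x cl[OF iQ[OF x] x]]] by simp
  then have "m x e = m x (m (i x) x)" using re[OF x] by simp
  then show ?thesis using lc[OF x eQ cl[OF iQ[OF x] x]] by simp
qed
lemma lip: "x \<in> Q \<Longrightarrow> y \<in> Q \<Longrightarrow> m (i x) (m x y) = y"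
proof -
  assume x: "x \<in> Q" and y: "y \<in> Q"
  have "m (m (i x) x) (m y (i x)) = m (m (i x) (m x y)) (i x)" using mo[OF iQ[OF x] x y] .
  then have "m y (i x) = m (m (i x) (m x y)) (i x)" using li[OF x] le cl[OF y iQ[OF x]] by simp
  then show ?thesis using rc[OF iQ[OF x] y cl[OF iQ[OF x] cl[OF x y]]] by simp
qed
lemma ii: "x \<in> Q \<Longrightarrow> i (i x) = x"
proof -
  assume x: "x \<in> Q"
  have "m (i x) (i (i x)) = m (i x) x" using ri[OF iQ[OF x]] li[OF x] by simp
  then show ?thesis using lc[OF iQ[OF x] iQ[OF iQ[OF x]] x] by simp
qed
lemma lip2: "x \<in> Q \<Longrightarrow> y \<in> Q \<Longrightarrow> m x (m (i x) y) = y"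
  using lip[of "i x" y] ii iQ by simp
lemma rip: "x \<in> Q \<Longrightarrow> y \<in> Q \<Longrightarrow> m (m y x) (i x) = y"
proof -
  assume x: "x \<in> Q" and y: "y \<in> Q"
  have "m (m x (m y x)) (m (i x) x) = m (m x (m (m y x) (i x))) x"
    using mo[OF x cl[OF y x] iQ[OF x]] .
  then have "m (m x y) x = m (m x (m (m y x) (i x))) x"
    using li[OF x] re cl[OF x cl[OF y x]] flex[OF x y] by simp
  then have "m x y = m x (m (m y x) (i x))"
    using rc[OF x cl[OF x y] cl[OF x cl[OF cl[OF y x] iQ[OF x]]]] by simp
  then show ?thesis using lc[OF x y cl[OF cl[OF y x] iQ[OF x]]] by simp
qed
lemma rip2: "x \<in> Q \<Longrightarrow> y \<in> Q \<Longrightarrow> m (m y (i x)) x = y"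
  using rip[of "i x" y] ii iQ by simp
lemma aaip: "x \<in> Q \<Longrightarrow> y \<in> Q \<Longrightarrow> i (m x y) = m (i y) (i x)"
proof -
  assume x: "x \<in> Q" and y: "y \<in> Q"
  define w where "w = m x y"
  have w: "w \<in> Q" using cl[OF x y] w_def by simp
  have "m w (i y) = x" using rip[OF y x] w_def by simp
  then have "m (i w) x = i y" using lip[OF w iQ[OF y]] by simp
  then have "m (i y) (i x) = i w" using rip[OF x iQ[OF w]] by simp
  then show ?thesis using w_def by simp
qed
lemma rot: "x \<in> Q \<Longrightarrow> y \<in> Q \<Longrightarrow> z \<in> Q \<Longrightarrow> m (m x y) z = e \<Longrightarrow> m (m y z) x = e"
proof -
  assume x: "x \<in> Q" and y: "y \<in> Q" and z: "z \<in> Q" and h: "m (m x y) z = e"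
  have "m (m x y) z = m (m x y) (i (m x y))" using h ri[OF cl[OF x y]] by simp
  then have "z = i (m x y)" using lc[OF cl[OF x y] z iQ[OF cl[OF x y]]] by simp
  then have "z = m (i y) (i x)" using aaip[OF x y] by simp
  then have "m y z = i x" using lip2[OF y iQ[OF x]] by simp
  then show ?thesis using li[OF x] by simp
qed
lemma rmo0: "t \<in> Q \<Longrightarrow> a \<in> Q \<Longrightarrow> b \<in> Q \<Longrightarrow>
   m (m b (i t)) (m t (m a t)) = m (m b a) t"
proof -
  assume t: "t \<in> Q" and a: "a \<in> Q" and b: "b \<in> Q"
  have "m (m t (i b)) (m (m b a) t) = m (m t (m (i b) (m b a))) t"
    using mo[OF t iQ[OF b] cl[OF b a]] .
  also have "\<dots> = m t (m a t)" using lip[OF b a] flex[OF t a] by simp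
  finally have E: "m (m t (i b)) (m (m b a) t) = m t (m a t)" .
  have "m (i (m t (i b))) (m (m t (i b)) (m (m b a) t)) = m (m b a) t"
    using lip[OF cl[OF t iQ[OF b]] cl[OF cl[OF b a] t]] .
  moreover have "i (m t (i b)) = m b (i t)" using aaip[OF t iQ[OF b]] ii[OF b] by simp
  ultimately show ?thesis using E by simp
qed
lemma rmo: "x \<in> Q \<Longrightarrow> y \<in> Q \<Longrightarrow> z \<in> Q \<Longrightarrow> m (m (m x y) z) y = m x (m (m y z) y)"
proof -
  assume x: "x \<in> Q" and y: "y \<in> Q" and z: "z \<in> Q"
  have "m (m (m x y) (i y)) (m y (m z y)) = m (m (m x y) z) y"
    using rmo0[OF y z cl[OF x y]] .
  then show ?thesis using rip[OF y x] flex[OF y z] by simp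
qed

abbreviation p where "p \<equiv> loop_pow m e"

lemma pQ: "a \<in> Q \<Longrightarrow> p a n \<in> Q"
  by (induction n) (auto simp: eQ cl)

lemma p1: "a \<in> Q \<Longrightarrow> p a 1 = a"
  by (simp add: le)

lemma Rp: "a \<in> Q \<Longrightarrow> ((\<lambda>y. m y a) ^^ n) (p a k) = p a (k + n)"
  by (induction n) auto

lemma fs: "(f ^^ Suc (Suc k)) x = f ((f ^^ k) (f x))"
  by (simp add: funpow_swap1)

lemma Ra0:
  assumes a: "a \<in> Q" shows "\<forall>y\<in>Q. m y (p a n) = ((\<lambda>y. m y a) ^^ n) y"
proof (induction n rule: less_induct)
  case (less n)
  show ?case
  proof (cases n)
    case 0 then show ?thesis by (simp add: re)
  next
    case (Suc n')
    show ?thesis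
    proof (cases n')
      case 0 then show ?thesis using Suc a by (simp add: le)
    next
      case (Suc k)
      have nk: "n = Suc (Suc k)" using \<open>n = Suc n'\<close> Suc by simp
      have IHk: "\<forall>y\<in>Q. m y (p a k) = ((\<lambda>y. m y a) ^^ k) y" using less[of k] nk by simp
      have "((\<lambda>y. m y a) ^^ k) (p a 1) = p a (1 + k)" by (rule Rp[OF a])
      then have a1: "m a (p a k) = p a (Suc k)" using IHk a p1[OF a] by simp
      have pn: "p a n = m (m a (p a k)) a" using nk a1 by simp
      show ?thesis
      proof
        fix y assume y: "y \<in> Q"
        have "m y (p a n) = m (m (m y a) (p a k)) a"
          using rmo[OF y a pQ[OF a, of k]] pn by simp
        also have "\<dots> = m (((\<lambda>y. m y a) ^^ k) (m y a)) a"
          using IHk cl[OF y a] by simp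
        also have "\<dots> = ((\<lambda>y. m y a) ^^ n) y"
          using fs[where f="\<lambda>y. m y a" and k=k and x=y] nk by simp
        finally show "m y (p a n) = ((\<lambda>y. m y a) ^^ n) y" .
      qed
    qed
  qed
qed

lemma Ra: "a \<in> Q \<Longrightarrow> y \<in> Q \<Longrightarrow> m y (p a n) = ((\<lambda>y. m y a) ^^ n) y"
  using Ra0 by blast

lemma padd: "a \<in> Q \<Longrightarrow> m (p a k) (p a n) = p a (k + n)"
  using Ra[of a "p a k" n] Rp[of a n k] pQ by simp

lemma pe: "p e n = e"
  by (induction n) (auto simp: eQ le)

lemma pmul: "a \<in> Q \<Longrightarrow> p (p a k) n = p a (k * n)"
  by (induction n) (auto simp: padd add.commute)

lemma ppe: "a \<in> Q \<Longrightarrow> p a n = e \<Longrightarrow> p a (n * q) = e"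
  by (metis pmul pe)

lemma Rcomp: "a \<in> Q \<Longrightarrow> y \<in> Q \<Longrightarrow> m (m y (p a k)) (p a j) = m y (p a (k + j))"
proof -
  assume a: "a \<in> Q" and y: "y \<in> Q"
  have "m (m y (p a k)) (p a j) = ((\<lambda>y. m y a) ^^ j) (m y (p a k))"
    using Ra[OF a, of "m y (p a k)" j] cl pQ a y by simp
  also have "\<dots> = ((\<lambda>y. m y a) ^^ j) (((\<lambda>y. m y a) ^^ k) y)"
    using Ra[OF a y, of k] by simp
  also have "\<dots> = ((\<lambda>y. m y a) ^^ (j + k)) y" by (simp add: funpow_add)
  also have "\<dots> = m y (p a (k + j))" using Ra[OF a y, of "k + j"] by (simp add: add.commute)
  finally show ?thesis .
qed

lemma pdiff: "a \<in> Q \<Longrightarrow> i' < j \<Longrightarrow> p a i' = p a j \<Longrightarrow> p a (j - i') = e"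
proof -
  assume a: "a \<in> Q" "i' < j" "p a i' = p a j"
  have "m (p a i') (p a (j - i')) = m (p a i') e"
    using a padd[of a i' "j - i'"] re pQ by simp
  then show ?thesis using lc[OF pQ[OF a(1)] pQ[OF a(1)] eQ] by simp
qed

lemma has_order: "finite Q \<Longrightarrow> a \<in> Q \<Longrightarrow> \<exists>n>0. p a n = e"
proof -
  assume fin: "finite Q" and a: "a \<in> Q"
  have "range (p a) \<subseteq> Q" using pQ a by auto
  then have "finite (range (p a))" using fin finite_subset by auto
  then have "\<not> inj (p a)" using finite_imageD[of "p a" UNIV] infinite_UNIV_nat by blast
  then obtain i' j where ij: "p a i' = p a j" "i' \<noteq> j" unfolding inj_def by blast
  show ?thesis
  proof (cases "i' < j")
    case True
    then show ?thesis using pdiff[OF a True ij(1)] by (intro exI[of _ "j - i'"]) auto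
  next
    case False
    then have lt: "j < i'" using ij(2) by simp
    then show ?thesis using pdiff[OF a lt ij(1)[symmetric]] by (intro exI[of _ "i' - j"]) auto
  qed
qed

lemma lagrange:
  assumes fin: "finite Q" and a: "a \<in> Q" and n: "n > 0" "p a n = e"
    and mn: "\<And>k. 0 < k \<Longrightarrow> k < n \<Longrightarrow> p a k \<noteq> e"
  shows "n dvd card Q"
proof -
  define r where "r = {(x,y). x\<in>Q \<and> y\<in>Q \<and> (\<exists>k. y = m x (p a k))}"
  have eq: "equiv Q r"
  proof (rule equivI)
    show "r \<subseteq> Q \<times> Q" by (auto simp: r_def)
    show "refl_on Q r" by (rule refl_onI) (auto simp: r_def intro!: exI[of _ 0] re[symmetric])
    show "sym r"
    proof (rule symI)
      fix x y assume "(x,y) \<in> r"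
      then obtain k where k: "x \<in> Q" "y \<in> Q" "y = m x (p a k)" by (auto simp: r_def)
      have "k \<le> n * k" using n by simp
      then have "m y (p a (n * k - k)) = m x (p a (n * k))"
        using Rcomp[OF a k(1), of k "n*k - k"] k by simp
      also have "\<dots> = x" using ppe[OF a n(2)] re k by simp
      finally have "x = m y (p a (n * k - k))" by simp
      then show "(y,x) \<in> r" using k by (auto simp: r_def)
    qed
    show "trans r"
      by (rule transI) (auto simp: r_def Rcomp[OF a])
  qed
  have "n dvd card Y" if "Y \<in> Q // r" for Y
  proof -
    obtain x where x: "x \<in> Q" "Y = r `` {x}" using \<open>Y \<in> Q // r\<close> by (auto elim: quotientE)
    have "Y = (\<lambda>k. m x (p a k)) ` {..<n}"
    proof
      show "Y \<subseteq> (\<lambda>k. m x (p a k)) ` {..<n}"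
      proof
        fix y assume "y \<in> Y"
        then obtain k where k: "y = m x (p a k)" using x by (auto simp: r_def)
        have "p a k = m (p a (n * (k div n))) (p a (k mod n))"
          using padd[OF a] by simp
        also have "\<dots> = p a (k mod n)" using ppe[OF a n(2)] le pQ a by simp
        finally show "y \<in> (\<lambda>k. m x (p a k)) ` {..<n}" using k n by auto
      qed
      show "(\<lambda>k. m x (p a k)) ` {..<n} \<subseteq> Y"
        using x a by (auto simp: r_def cl pQ)
    qed
    moreover have "inj_on (\<lambda>k. m x (p a k)) {..<n}"
    proof (rule inj_onI)
      fix u v assume uv: "u \<in> {..<n}" "v \<in> {..<n}" "m x (p a u) = m x (p a v)"
      then have eqp: "p a u = p a v" using lc[OF x(1) pQ[OF a] pQ[OF a]] by simp
      show "u = v"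
      proof (rule ccontr)
        assume "u \<noteq> v"
        then consider "u < v" | "v < u" by linarith
        then show False
        proof cases
          case 1 then show ?thesis using pdiff[OF a 1 eqp] mn uv by auto
        next
          case 2 then show ?thesis using pdiff[OF a 2 eqp[symmetric]] mn uv by auto
        qed
      qed
    qed
    ultimately show ?thesis by (simp add: card_image)
  qed
  then show ?thesis by (intro equiv_imp_dvd_card[OF fin eq])
qed

lemma ord_dvd: "finite Q \<Longrightarrow> a \<in> Q \<Longrightarrow> \<exists>n>0. p a n = e \<and> n dvd card Q"
proof -
  assume fin: "finite Q" and a: "a \<in> Q"
  define n where "n = (LEAST n. 0 < n \<and> p a n = e)"
  have ex: "\<exists>n. 0 < n \<and> p a n = e" using has_order[OF fin a] by blast
  have n: "0 < n \<and> p a n = e" unfolding n_def by (rule LeastI_ex[OF ex])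
  have mn: "p a k \<noteq> e" if "0 < k" "k < n" for k
    using not_less_Least[of k "\<lambda>n. 0 < n \<and> p a n = e"] that unfolding n_def by blast
  show ?thesis using lagrange[OF fin a _ _ mn] n by blast
qed

end

lemma cop_small:
  assumes "\<not> q dvd (n::nat)" and "q = 2 \<or> q = 3"
  shows "coprime n q"
proof -
  define g where "g = gcd n q"
  have g1: "g dvd q" "g dvd n" unfolding g_def by auto
  have gq: "g \<le> q" using dvd_imp_le[OF g1(1)] assms(2) by auto
  moreover have "g \<noteq> 0" using assms(2) unfolding g_def by auto
  ultimately have "g = 1 \<or> g = 2 \<or> g = 3" using assms(2) by auto
  moreover have "g \<noteq> 2 \<or> q = 2" using g1(1) assms(2) by auto
  moreover have "g \<noteq> q" using g1(2) assms(1) by auto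
  ultimately have "g = 1" using assms(2) gq by auto
  then show ?thesis unfolding g_def by (simp add: coprime_iff_gcd_eq_1)
qed

theorem proposition1p13:
  fixes Q :: "'a set" and m :: "'a \<Rightarrow> 'a \<Rightarrow> 'a" and e :: 'a and a b d :: nat
  assumes "moufang_loop Q m e" and "finite Q"
    and "d = 2 ^ a * 3 ^ b" and "d > 1"
  shows "uniquely_divisible Q m e d \<longleftrightarrow> coprime (card Q) d"
proof -
  note fin = assms(2)
  have L: "loop Q m e" and MO: "\<forall>x\<in>Q. \<forall>y\<in>Q. \<forall>z\<in>Q. m (m x y) (m z x) = m (m x (m y z)) x"
    using assms(1) unfolding moufang_loop_def by auto
  have eQ: "e \<in> Q" and cl: "\<And>x y. x \<in> Q \<Longrightarrow> y \<in> Q \<Longrightarrow> m x y \<in> Q"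
    and id: "\<And>x. x \<in> Q \<Longrightarrow> m e x = x \<and> m x e = x"
    and bl: "\<And>a. a \<in> Q \<Longrightarrow> bij_betw (\<lambda>x. m a x) Q Q"
    and br: "\<And>a. a \<in> Q \<Longrightarrow> bij_betw (\<lambda>x. m x a) Q Q"
    using L unfolding loop_def by auto
  define i where "i x = (SOME y. y \<in> Q \<and> m x y = e)" for x
  have iex: "i x \<in> Q \<and> m x (i x) = e" if x: "x \<in> Q" for x
  proof -
    have "e \<in> (\<lambda>y. m x y) ` Q" using bl[OF x] eQ unfolding bij_betw_def by simp
    then have "\<exists>y. y \<in> Q \<and> m x y = e" by auto
    then show ?thesis unfolding i_def by (rule someI_ex)
  qed
  interpret M: mfl Q m e i
  proof
    show "\<And>x y z. x \<in> Q \<Longrightarrow> y \<in> Q \<Longrightarrow> z \<in> Q \<Longrightarrow> m x y = m x z \<Longrightarrow> y = z"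
      using bl unfolding bij_betw_def inj_on_def by blast
    show "\<And>x y z. x \<in> Q \<Longrightarrow> y \<in> Q \<Longrightarrow> z \<in> Q \<Longrightarrow> m y x = m z x \<Longrightarrow> y = z"
      using br unfolding bij_betw_def inj_on_def by blast
  qed (use eQ cl id iex MO in auto)
  define f where "f x = loop_pow m e x d" for x
  have fQ: "f x \<in> Q" if "x \<in> Q" for x using M.pQ that unfolding f_def by simp
  have fe: "f e = e" unfolding f_def by (rule M.pe)
  show ?thesis
  proof
    assume "uniquely_divisible Q m e d"
    then have inj: "inj_on f Q" unfolding uniquely_divisible_def f_def bij_betw_def by auto
    show "coprime (card Q) d"
    proof (rule ccontr)
      assume nc: "\<not> coprime (card Q) d"
      have "(a > 0 \<and> 2 dvd card Q) \<or> (b > 0 \<and> 3 dvd card Q)"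
      proof (rule ccontr)
        assume h: "\<not> ((a > 0 \<and> 2 dvd card Q) \<or> (b > 0 \<and> 3 dvd card Q))"
        have c2: "coprime (card Q) (2 ^ a)"
        proof (cases "a = 0")
          case False then have "\<not> 2 dvd card Q" using h by auto
          then show ?thesis using cop_small[of 2 "card Q"] by simp
        qed simp
        have c3: "coprime (card Q) (3 ^ b)"
        proof (cases "b = 0")
          case False then have "\<not> 3 dvd card Q" using h by auto
          then show ?thesis using cop_small[of 3 "card Q"] by simp
        qed simp
        have "coprime (card Q) d" using c2 c3 assms(3) by simp
        then show False using nc by simp
      qed
      then show False
      proof
        assume h2: "a > 0 \<and> 2 dvd card Q"
        define T where "T = {x\<in>Q. i x = x}"
        have T: "T \<subseteq> Q" "finite T" using fin unfolding T_def by auto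
        have "2 dvd card (Q - T)" unfolding T_def
          by (rule cyc2) (use fin M.iQ M.ii in auto)
        then have "2 dvd card Q - card T" using card_Diff_subset[OF T(2) T(1)] by simp
        moreover have "card T \<le> card Q" using card_mono[OF fin T(1)] .
        ultimately have "2 dvd card Q - (card Q - card T)" using h2 by (intro dvd_diff_nat) auto
        then have eT: "2 dvd card T" using \<open>card T \<le> card Q\<close> by simp
        have "i e = e" using M.ri[OF eQ] M.le[OF M.iQ[OF eQ]] by simp
        then have "e \<in> T" using eQ unfolding T_def by simp
        then have "card T > 0" using T(2) card_gt_0_iff by blast
        then have "card T \<ge> 2" using eT by auto
        have "\<not> T \<subseteq> {e}"
        proof
          assume "T \<subseteq> {e}"
          then have "card T \<le> 1" using card_mono[of "{e}" T] by simp
          then show False using \<open>card T \<ge> 2\<close> by simp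
        qed
        then obtain x where x: "x \<in> T" "x \<noteq> e" by auto
        then have xQ: "x \<in> Q" and ix: "i x = x" unfolding T_def by auto
        have "m x x = e" using M.ri[OF xQ] ix by simp
        then have p2: "loop_pow m e x 2 = e" using M.le[OF xQ] by (simp add: numeral_2_eq_2)
        obtain a' where "a = Suc a'" using h2 gr0_implies_Suc by blast
        then have dk: "d = 2 * (2 ^ a' * 3 ^ b)" using assms(3) by simp
        define k :: nat where "k = 2 ^ a' * 3 ^ b"
        have "f x = loop_pow m e (loop_pow m e x 2) k" unfolding f_def dk k_def[symmetric] using M.pmul[OF xQ] by simp
        then have "f x = e" using p2 M.pe by simp
        then have "f x = f e" using fe by simp
        then have "x = e" using inj xQ eQ unfolding inj_on_def by blast
        then show False using x(2) by simp
      next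
        assume h3: "b > 0 \<and> 3 dvd card Q"
        define X where "X = {(x,y,z). x \<in> Q \<and> y \<in> Q \<and> z \<in> Q \<and> m (m x y) z = e}"
        define s where "s = (\<lambda>(x::'a,y::'a,z::'a). (y,z,x))"
        have XQ: "X \<subseteq> Q \<times> Q \<times> Q" unfolding X_def by auto
        have finX: "finite X" using finite_subset[OF XQ] fin by auto
        have sX: "s t \<in> X" if "t \<in> X" for t
          using that M.rot unfolding X_def s_def by auto
        have sss: "s (s (s t)) = t" for t unfolding s_def by (cases t) auto
        have Ximg: "X = (\<lambda>(x,y). (x, y, i (m x y))) ` (Q \<times> Q)"
        proof
          show "X \<subseteq> (\<lambda>(x,y). (x, y, i (m x y))) ` (Q \<times> Q)"
          proof
            fix t assume "t \<in> X"
            then obtain x y z where t: "t = (x,y,z)" "x \<in> Q" "y \<in> Q" "z \<in> Q" "m (m x y) z = e"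
              unfolding X_def by auto
            have "m (m x y) z = m (m x y) (i (m x y))" using t(5) M.ri[OF cl[OF t(2) t(3)]] by simp
            then have "z = i (m x y)" using M.lc[OF cl[OF t(2) t(3)] t(4) M.iQ[OF cl[OF t(2) t(3)]]] by simp
            then show "t \<in> (\<lambda>(x,y). (x, y, i (m x y))) ` (Q \<times> Q)" using t by auto
          qed
          show "(\<lambda>(x,y). (x, y, i (m x y))) ` (Q \<times> Q) \<subseteq> X"
            unfolding X_def using M.ri M.iQ cl by auto
        qed
        have "inj_on (\<lambda>(x,y). (x, y, i (m x y))) (Q \<times> Q)" by (auto simp: inj_on_def)
        then have "card X = card Q * card Q" unfolding Ximg by (simp add: card_image card_cartesian_product)
        then have "3 dvd card X" using h3 by simp
        define F where "F = {t\<in>X. s t = t}"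
        have F: "F \<subseteq> X" "finite F" using finX unfolding F_def by auto
        have "3 dvd card (X - F)" unfolding F_def
          by (rule cyc3) (use finX sX sss in auto)
        then have d3: "3 dvd card X - card F" using card_Diff_subset[OF F(2) F(1)] by simp
        have "card F \<le> card X" using card_mono[OF finX F(1)] .
        have "3 dvd card X - (card X - card F)" using dvd_diff_nat[OF \<open>3 dvd card X\<close> d3] .
        then have eF: "3 dvd card F" using \<open>card F \<le> card X\<close> by simp
        have "(e,e,e) \<in> F" unfolding F_def X_def s_def using eQ M.le by simp
        then have "card F > 0" using F(2) card_gt_0_iff by blast
        then have "card F \<ge> 3" using eF by (auto dest: dvd_imp_le)
        have "\<not> F \<subseteq> {(e,e,e)}"
        proof
          assume "F \<subseteq> {(e,e,e)}"
          then have "card F \<le> 1" using card_mono[of "{(e,e,e)}" F] by simp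
          then show False using \<open>card F \<ge> 3\<close> by simp
        qed
        then obtain t where t: "t \<in> F" "t \<noteq> (e,e,e)" by auto
        then obtain x y z where txyz: "t = (x,y,z)" by (cases t) auto
        have st: "s t = t" and tX: "t \<in> X" using t(1) unfolding F_def by auto
        have h: "s (x,y,z) = (x,y,z)" using st txyz by simp
        have h': "(y,z,x) = (x,y,z)" using h unfolding s_def by (simp only: prod.case)
        have yx: "y = x" "z = x" using h' by (metis prod.inject)+
        have xQ: "x \<in> Q" and x3': "m (m x y) z = e" using tX txyz unfolding X_def by auto
        have x3: "m (m x x) x = e" using x3' yx by simp
        have xe: "x \<noteq> e" using t(2) txyz yx by auto
        have p3: "loop_pow m e x 3 = e" using x3 M.le[OF xQ] by (simp add: numeral_3_eq_3)
        obtain b' where "b = Suc b'" using h3 gr0_implies_Suc by blast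
        then have dk: "d = 3 * (2 ^ a * 3 ^ b')" using assms(3) by simp
        define k :: nat where "k = 2 ^ a * 3 ^ b'"
        have "f x = loop_pow m e (loop_pow m e x 3) k" unfolding f_def dk k_def[symmetric] using M.pmul[OF xQ] by simp
        then have "f x = e" using p3 M.pe by simp
        then have "f x = f e" using fe by simp
        then have "x = e" using inj xQ eQ unfolding inj_on_def by blast
        then show False using xe by simp
      qed
    qed
  next
    assume cop: "coprime (card Q) d"
    have d0: "d \<noteq> 0" using assms(4) by simp
    have sub: "Q \<subseteq> f ` Q"
    proof
      fix y assume y: "y \<in> Q"
      obtain n where n: "n > 0" "loop_pow m e y n = e" "n dvd card Q" using M.ord_dvd[OF fin y] by blast
      have "coprime n d" using coprime_divisors[OF n(3) dvd_refl cop] .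
      then have g: "gcd d n = 1" by (simp add: coprime_iff_gcd_eq_1 gcd.commute)
      obtain u v where uv: "d * u = n * v + gcd d n" using bezout_nat[OF d0] by blast
      have "f (loop_pow m e y u) = loop_pow m e y (u * d)" unfolding f_def using M.pmul[OF y] by simp
      also have "u * d = n * v + 1" using uv g by (simp add: mult.commute)
      also have "loop_pow m e y (n * v + 1) = m (loop_pow m e y (n * v)) (loop_pow m e y 1)"
        using M.padd[OF y, of "n * v" 1] M.p1[OF y] by simp
      also have "\<dots> = y" using M.ppe[OF y n(2)] M.p1[OF y] M.le[OF y] by simp
      finally show "y \<in> f ` Q" using M.pQ[OF y] by (metis imageI)
    qed
    have img: "f ` Q = Q" using sub fQ by auto
    then have "inj_on f Q" using eq_card_imp_inj_on[OF fin, of f] by simp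
    then show "uniquely_divisible Q m e d"
      unfolding uniquely_divisible_def bij_betw_def using img unfolding f_def by simp
  qed
qed

end
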